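(* Let $m \geq 2$ and $1 \leq k \leq m-1$ be integers. For indeterminates $x, s$, write $$1 - xz + s z^m = \prod_{j=1}^{m} \bigl(1 - u_j z\bigr)$$ with $u_1,\dots,u_m$ in an algebraic closure of $\mathbb{Q}(x,s)$, and define $$c(m,k,x,s,z) = \prod_{1 \leq i_1 < i_2 < \cdots < i_k \leq m} \bigl(z - u_{i_1} u_{i_2} \cdots u_{i_k}\bigr),$$ a polynomial in $z$ of degree $\binom{m}{k}$ with coefficients in $\mathbb{Z}[x,s]$. After the substitution $(x,s) \mapsto (x+1,x)$ we have $$1 - (x+1)z + x z^m = (1-z)\prod_{j=2}^{m}(1 - v_j z),$$ with $v_2,\dots,v_m$ in an algebraic closure of $\mathbb{Q}(x)$. Define $$w_{k-1}(m,x,z) = \prod_{2 \leq i_1 < \cdots < i_{k-1} \leq m} \bigl(z - v_{i_1}\cdots v_{i_{k-1}}\bigr), \qquad w_k(m,x,z) = \prod_{2 \leq i_1 < \cdots < i_{k} \leq m} \bigl(z - v_{i_1}\cdots v_{i_{k}}\bigr),$$ where for $k=1$ the empty product of the $v$'s equals $1$, so that $w_0(m,x,z) = z - 1$. Then $$c(m,k,x+1,x,z) = w_{k-1}(m,x,z)\, w_k(m,x,z),$$ and both $w_{k-1}(m,x,z)$ and $w_k(m,x,z)$ are polynomials with integer coefficients, i.e. they lie in $\mathbb{Z}[x,z]$.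
   Context: The polynomial $c(m,k,x,s,z)$ is the characteristic polynomial of the linear recurrence satisfied (in $n$) by the sequence $p_k(n,m,x,s) = (-1)^{k+1}\sum_{1 \leq i_1 < \cdots < i_k \leq m} (u_{i_1}\cdots u_{i_k})^n$, $n \geq 1$. In the factorization after the substitution $(x,s)\mapsto(x+1,x)$, one root of $1-(x+1)z+xz^m$ (in the sense of the factors $1-u_jz$) equals $1$, since $1-(x+1)z+xz^m=(1-z)\bigl(1 - xz\,\tfrac{1-z^{m-1}}{1-z}\bigr)$; the $v_j$ are the remaining $m-1$ such roots. *)

theory Defs
  imports "HOL-Computational_Algebra.Polynomial" "HOL-Computational_Algebra.Fraction_Field"
          "HOL-Algebra.Algebraic_Closure_Type"
begin

(* Z[x,s] is represented as int poly poly: the OUTER variable is x, the coefficients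
   are int polynomials in s.  So x = [:0,1:] and s = [:[:0,1:]:]. *)
type_synonym Kxs = "int poly poly fract alg_closure"
type_synonym Kx = "int poly fract alg_closure"

definition embxs :: "int poly poly \<Rightarrow> Kxs" where
  "embxs p = to_ac (Fract p 1)"

definition embx :: "int poly \<Rightarrow> Kx" where
  "embx p = to_ac (Fract p 1)"

definition ksubsets :: "nat set \<Rightarrow> nat \<Rightarrow> nat set set" where
  "ksubsets A k = {I. I \<subseteq> A \<and> card I = k}"

(* c(m,k,x,s,z): the polynomial in z (outermost) with coefficients in Z[x,s] whose
   image in Kxs[z] is prod_{I, |I|=k} (z - prod_{i in I} u_i), where
   1 - x z + s z^m = prod_{j=1}^m (1 - u_j z) in Kxs[z]. *)
definition c_poly :: "nat \<Rightarrow> nat \<Rightarrow> int poly poly poly" where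
  "c_poly m k = (THE P. \<forall>u :: nat \<Rightarrow> Kxs.
      ([:1:] - [:0, embxs [:0, 1:]:] + monom (embxs [:[:0, 1:]:]) m
         = (\<Prod>j\<in>{1..m}. [:1, - u j:]))
      \<longrightarrow> map_poly embxs P = (\<Prod>I\<in>ksubsets {1..m} k. [:- (\<Prod>i\<in>I. u i), 1:]))"

(* substitution (x,s) |-> (x+1,x) on Z[x,s] -> Z[x] *)
definition subst_xs :: "int poly poly \<Rightarrow> int poly" where
  "subst_xs p = poly p [:1, 1:]"

end

theory Submission
  imports Defs "HOL-Library.Poly_Mapping"
begin


definition rhom :: "('a::comm_ring_1 \<Rightarrow> 'b::comm_ring_1) \<Rightarrow> bool" where
  "rhom h \<longleftrightarrow> (\<forall>x y. h (x + y) = h x + h y) \<and> (\<forall>x y. h (x * y) = h x * h y) \<and> h 1 = 1"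

lemma rhom_add: "rhom h \<Longrightarrow> h (x + y) = h x + h y" by (simp add: rhom_def)
lemma rhom_mult: "rhom h \<Longrightarrow> h (x * y) = h x * h y" by (simp add: rhom_def)
lemma rhom_one: "rhom h \<Longrightarrow> h 1 = 1" by (simp add: rhom_def)
lemma rhom_zero: "rhom h \<Longrightarrow> h 0 = 0"
  by (metis add_cancel_right_right add_0 rhom_add)
lemma rhom_uminus: "rhom h \<Longrightarrow> h (- x) = - h x"
  by (metis add.right_inverse eq_neg_iff_add_eq_0 rhom_add rhom_zero)
lemma rhom_diff: "rhom h \<Longrightarrow> h (x - y) = h x - h y"
  by (metis diff_conv_add_uminus rhom_add rhom_uminus)
lemma rhom_sum: "rhom h \<Longrightarrow> h (sum f A) = (\<Sum>x\<in>A. h (f x))"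
  by (induction A rule: infinite_finite_induct) (auto simp: rhom_zero rhom_add)
lemma rhom_prod: "rhom h \<Longrightarrow> h (prod f A) = (\<Prod>x\<in>A. h (f x))"
  by (induction A rule: infinite_finite_induct) (auto simp: rhom_one rhom_mult)
lemma rhom_power: "rhom h \<Longrightarrow> h (x ^ n) = h x ^ n"
  by (induction n) (auto simp: rhom_one rhom_mult)
lemma rhom_of_int: "rhom h \<Longrightarrow> h (of_int n) = of_int n"
proof (induction n rule: int_induct[where k=0])
  case base then show ?case by (simp add: rhom_zero)
next
  case (step1 i) then show ?case by (simp add: rhom_add rhom_one)
next
  case (step2 i) then show ?case by (simp add: rhom_diff rhom_one)
qed
lemma rhom_comp: "rhom h \<Longrightarrow> rhom g \<Longrightarrow> rhom (g \<circ> h)"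
  by (simp add: rhom_def)
lemma rhom_id: "rhom (\<lambda>x. x)" by (simp add: rhom_def)

lemma rhom_map_poly: assumes "rhom h" shows "rhom (map_poly h)"
proof -
  have z: "h 0 = 0" using assms by (rule rhom_zero)
  have a: "map_poly h (p + q) = map_poly h p + map_poly h q" for p q
    by (intro poly_eqI) (simp add: coeff_map_poly z rhom_add[OF assms])
  have m: "map_poly h (p * q) = map_poly h p * map_poly h q" for p q
    by (intro poly_eqI) (simp add: coeff_map_poly z coeff_mult rhom_sum[OF assms] rhom_mult[OF assms])
  show ?thesis using a m by (simp add: rhom_def rhom_one[OF assms])
qed

lemma rhom_poly: "rhom (\<lambda>p. poly p x)"
  by (simp add: rhom_def poly_add poly_mult)

lemma map_poly_pCons_h: "rhom h \<Longrightarrow> map_poly h (pCons a p) = pCons (h a) (map_poly h p)"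
  by (simp add: map_poly_pCons rhom_zero)

lemma map_poly_comp_h: "rhom h \<Longrightarrow> rhom g \<Longrightarrow> map_poly g (map_poly h p) = map_poly (g \<circ> h) p"
  by (simp add: map_poly_map_poly rhom_zero)

lemma poly_map_poly_h: assumes "rhom h" shows "h (poly p x) = poly (map_poly h p) (h x)"
  by (induction p) (auto simp: map_poly_pCons_h assms rhom_add[OF assms] rhom_mult[OF assms] rhom_zero[OF assms])

lemma map_poly_pcompose_h: assumes "rhom h"
  shows "map_poly h (pcompose p q) = pcompose (map_poly h p) (map_poly h q)"
proof (induction p)
  case 0 then show ?case by simp
next
  case (pCons a p)
  have hm: "rhom (map_poly h)" by (rule rhom_map_poly[OF assms])
  show ?case using pCons
    by (simp add: pcompose_pCons map_poly_pCons_h[OF assms] rhom_add[OF hm] rhom_mult[OF hm]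
        map_poly_pCons_h[OF assms] rhom_zero[OF assms])
qed

lemma coeff_map_poly_h: "rhom h \<Longrightarrow> Polynomial.coeff (map_poly h p) i = h (Polynomial.coeff p i)"
  by (simp add: coeff_map_poly rhom_zero)




type_synonym MP = "(nat \<Rightarrow>\<^sub>0 nat) \<Rightarrow>\<^sub>0 int"

definition mon :: "(nat \<Rightarrow> 'b::comm_ring_1) \<Rightarrow> (nat \<Rightarrow>\<^sub>0 nat) \<Rightarrow> 'b" where
  "mon \<rho> m = (\<Prod>i\<in>Poly_Mapping.keys m. \<rho> i ^ Poly_Mapping.lookup m i)"

definition mev :: "(nat \<Rightarrow> 'b::comm_ring_1) \<Rightarrow> MP \<Rightarrow> 'b" where
  "mev \<rho> p = (\<Sum>m\<in>Poly_Mapping.keys p. of_int (Poly_Mapping.lookup p m) * mon \<rho> m)"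

lemma mon_superset: "finite K \<Longrightarrow> Poly_Mapping.keys m \<subseteq> K \<Longrightarrow> mon \<rho> m = (\<Prod>i\<in>K. \<rho> i ^ Poly_Mapping.lookup m i)"
  unfolding mon_def
  by (rule prod.mono_neutral_left) (auto simp: not_in_keys_iff_lookup_eq_zero)

lemma mon_add: "mon \<rho> (a + b) = mon \<rho> a * mon \<rho> b"
proof -
  let ?K = "Poly_Mapping.keys a \<union> Poly_Mapping.keys b"
  have f: "finite ?K" by simp
  have "mon \<rho> (a + b) = (\<Prod>i\<in>?K. \<rho> i ^ Poly_Mapping.lookup (a+b) i)"
    by (rule mon_superset[OF f keys_add])
  also have "\<dots> = (\<Prod>i\<in>?K. \<rho> i ^ Poly_Mapping.lookup a i) * (\<Prod>i\<in>?K. \<rho> i ^ Poly_Mapping.lookup b i)"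
    by (simp add: lookup_add power_add prod.distrib)
  also have "\<dots> = mon \<rho> a * mon \<rho> b"
    by (simp add: mon_superset[OF f])
  finally show ?thesis .
qed

lemma mon_zero [simp]: "mon \<rho> 0 = 1" by (simp add: mon_def)

lemma mev_superset: "finite K \<Longrightarrow> Poly_Mapping.keys p \<subseteq> K \<Longrightarrow>
    mev \<rho> p = (\<Sum>m\<in>K. of_int (Poly_Mapping.lookup p m) * mon \<rho> m)"
  unfolding mev_def
  by (rule sum.mono_neutral_left) (auto simp: not_in_keys_iff_lookup_eq_zero)

lemma mev_add: "mev \<rho> (p + q) = mev \<rho> p + mev \<rho> q"
proof -
  let ?K = "Poly_Mapping.keys p \<union> Poly_Mapping.keys q"
  have f: "finite ?K" by simp
  have "mev \<rho> (p + q) = (\<Sum>m\<in>?K. of_int (Poly_Mapping.lookup (p+q) m) * mon \<rho> m)"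
    by (rule mev_superset[OF f keys_add])
  also have "\<dots> = mev \<rho> p + mev \<rho> q"
    by (simp add: mev_superset[OF f] lookup_add sum.distrib distrib_right)
  finally show ?thesis .
qed

lemma mev_zero [simp]: "mev \<rho> 0 = 0" by (simp add: mev_def)

lemma mev_single: "mev \<rho> (Poly_Mapping.single m c) = of_int c * mon \<rho> m"
  by (simp add: mev_def)

lemma mev_one: "mev \<rho> 1 = 1"
  by (simp add: mev_def)

lemma update_as_add: "a \<notin> Poly_Mapping.keys f \<Longrightarrow> Poly_Mapping.update a b f = f + Poly_Mapping.single a b"
  by (rule poly_mapping_eqI) (auto simp: lookup_update lookup_add lookup_single when_def not_in_keys_iff_lookup_eq_zero)

lemma mev_single_mult: "mev \<rho> (Poly_Mapping.single a b * q) = of_int b * mon \<rho> a * mev \<rho> q"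
proof (induction q rule: Poly_Mapping.update_induct)
  case const then show ?case by simp
next
  case (update f c d)
  then show ?case
    by (simp add: update_as_add distrib_left mev_add mult_single mev_single mon_add algebra_simps)
qed

lemma mev_mult: "mev \<rho> (p * q) = mev \<rho> p * mev \<rho> q"
proof (induction p rule: Poly_Mapping.update_induct)
  case const then show ?case by simp
next
  case (update f a b)
  show ?case
    by (simp only: update_as_add[OF update(1)] distrib_right mev_add mev_single_mult mev_single update(3))
qed

lemma rhom_mev: "rhom (mev \<rho>)"
  by (simp add: rhom_def mev_add mev_mult mev_one)

definition Xv :: "nat \<Rightarrow> MP" where "Xv i = Poly_Mapping.single (Poly_Mapping.single i 1) 1"

lemma mev_Xv [simp]: "mev \<rho> (Xv i) = \<rho> i"
  by (simp add: Xv_def mev_single mon_def)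

lemma Xv_inj: "inj Xv"
proof (rule injI)
  fix i j assume "Xv i = Xv j"
  then have "Poly_Mapping.lookup (Xv i) (Poly_Mapping.single i 1) = Poly_Mapping.lookup (Xv j) (Poly_Mapping.single i 1)"
    by simp
  then have "Poly_Mapping.single j (1::nat) = Poly_Mapping.single i 1"
    unfolding Xv_def lookup_single by (simp add: when_def split: if_splits)
  then have "Poly_Mapping.lookup (Poly_Mapping.single j (1::nat)) i = Poly_Mapping.lookup (Poly_Mapping.single i 1) i"
    by simp
  then show "i = j" by (simp add: lookup_single when_def split: if_splits)
qed

lemma mev_comp: assumes "rhom h" shows "h (mev \<rho> p) = mev (h \<circ> \<rho>) p"
  by (simp add: mev_def mon_def rhom_sum[OF assms] rhom_mult[OF assms] rhom_of_int[OF assms]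
      rhom_prod[OF assms] rhom_power[OF assms])

definition sr :: "'a::comm_ring_1 set \<Rightarrow> bool" where
  "sr R \<longleftrightarrow> 0 \<in> R \<and> 1 \<in> R \<and> (\<forall>x\<in>R. \<forall>y\<in>R. x + y \<in> R \<and> x * y \<in> R \<and> - x \<in> R)"

lemma sr_add: "sr R \<Longrightarrow> x \<in> R \<Longrightarrow> y \<in> R \<Longrightarrow> x + y \<in> R" by (simp add: sr_def)
lemma sr_mult: "sr R \<Longrightarrow> x \<in> R \<Longrightarrow> y \<in> R \<Longrightarrow> x * y \<in> R" by (simp add: sr_def)
lemma sr_uminus: "sr R \<Longrightarrow> x \<in> R \<Longrightarrow> - x \<in> R" by (simp add: sr_def)
lemma sr_zero: "sr R \<Longrightarrow> 0 \<in> R" by (simp add: sr_def)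
lemma sr_one: "sr R \<Longrightarrow> 1 \<in> R" by (simp add: sr_def)
lemma sr_diff: "sr R \<Longrightarrow> x \<in> R \<Longrightarrow> y \<in> R \<Longrightarrow> x - y \<in> R"
  by (metis diff_conv_add_uminus sr_add sr_uminus)
lemma sr_sum: "sr R \<Longrightarrow> (\<And>x. x \<in> A \<Longrightarrow> f x \<in> R) \<Longrightarrow> sum f A \<in> R"
  by (induction A rule: infinite_finite_induct) (auto simp: sr_zero sr_add)
lemma sr_prod: "sr R \<Longrightarrow> (\<And>x. x \<in> A \<Longrightarrow> f x \<in> R) \<Longrightarrow> prod f A \<in> R"
  by (induction A rule: infinite_finite_induct) (auto simp: sr_one sr_mult)
lemma sr_power: "sr R \<Longrightarrow> x \<in> R \<Longrightarrow> x ^ n \<in> R"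
  by (induction n) (auto simp: sr_one sr_mult)
lemma sr_of_int: "sr R \<Longrightarrow> of_int n \<in> R"
proof (induction n rule: int_induct[where k=0])
  case base then show ?case by (simp add: sr_zero)
next
  case (step1 i) then show ?case by (simp add: sr_add sr_one)
next
  case (step2 i) then show ?case by (simp add: sr_diff sr_one)
qed

lemma mev_in_sr: "sr R \<Longrightarrow> (\<And>i. \<rho> i \<in> R) \<Longrightarrow> mev \<rho> p \<in> R"
  unfolding mev_def mon_def
proof -
  assume R: "sr R" and r: "\<And>i. \<rho> i \<in> R"
  show "(\<Sum>m\<in>Poly_Mapping.keys p. of_int (Poly_Mapping.lookup p m) * (\<Prod>i\<in>Poly_Mapping.keys m. \<rho> i ^ Poly_Mapping.lookup m i)) \<in> R"
    by (rule sr_sum[OF R], rule sr_mult[OF R], rule sr_of_int[OF R], rule sr_prod[OF R], rule sr_power[OF R], rule r)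
qed

lemma sr_range: "rhom h \<Longrightarrow> sr (range h)"
  unfolding sr_def
proof (intro conjI ballI)
  assume h: "rhom h"
  show "0 \<in> range h" using rhom_zero[OF h] by (metis rangeI)
  show "1 \<in> range h" using rhom_one[OF h] by (metis rangeI)
  fix x y assume "x \<in> range h" "y \<in> range h"
  then obtain a b where ab: "x = h a" "y = h b" by auto
  show "x + y \<in> range h" using ab rhom_add[OF h, of a b] by (metis rangeI)
  show "x * y \<in> range h" using ab rhom_mult[OF h, of a b] by (metis rangeI)
  show "- x \<in> range h" using ab rhom_uminus[OF h, of a] by (metis rangeI)
qed




definition Gr :: "nat set \<Rightarrow> nat \<Rightarrow> (nat \<Rightarrow> 'a::comm_ring_1) \<Rightarrow> 'a poly" where
  "Gr A k u = (\<Prod>I\<in>ksubsets A k. [:1, - (\<Prod>i\<in>I. u i):])"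
definition Gm :: "nat set \<Rightarrow> nat \<Rightarrow> (nat \<Rightarrow> 'a::comm_ring_1) \<Rightarrow> 'a poly" where
  "Gm A k u = (\<Prod>I\<in>ksubsets A k. [:- (\<Prod>i\<in>I. u i), 1:])"
definition Fr :: "nat set \<Rightarrow> (nat \<Rightarrow> 'a::comm_ring_1) \<Rightarrow> 'a poly" where
  "Fr A u = (\<Prod>j\<in>A. [:1, - u j:])"

lemma ksubsets_finite: "finite A \<Longrightarrow> finite (ksubsets A k)"
  unfolding ksubsets_def by (rule finite_subset[of _ "Pow A"]) auto

lemma ksubsets_0: "finite A \<Longrightarrow> ksubsets A 0 = {{}}"
  unfolding ksubsets_def by (auto dest: finite_subset)

lemma ksubsets_insert:
  assumes "a \<notin> A" "finite A"
  shows "ksubsets (insert a A) (Suc k) = ksubsets A (Suc k) \<union> insert a ` ksubsets A k"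
proof (rule equalityI; rule subsetI)
  fix I assume "I \<in> ksubsets (insert a A) (Suc k)"
  then have I: "I \<subseteq> insert a A" "card I = Suc k" by (auto simp: ksubsets_def)
  have fI: "finite I" using I assms by (meson finite_insert finite_subset)
  show "I \<in> ksubsets A (Suc k) \<union> insert a ` ksubsets A k"
  proof (cases "a \<in> I")
    case True
    then have "I = insert a (I - {a})" "I - {a} \<subseteq> A" "card (I - {a}) = k" using I fI by auto
    then show ?thesis unfolding ksubsets_def by blast
  next
    case False
    then show ?thesis using I by (auto simp: ksubsets_def)
  qed
next
  fix I assume "I \<in> ksubsets A (Suc k) \<union> insert a ` ksubsets A k"
  then show "I \<in> ksubsets (insert a A) (Suc k)"
  proof
    assume "I \<in> ksubsets A (Suc k)" then show ?thesis by (auto simp: ksubsets_def)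
  next
    assume "I \<in> insert a ` ksubsets A k"
    then obtain J where J: "J \<subseteq> A" "card J = k" "I = insert a J" by (auto simp: ksubsets_def)
    have "finite J" using J assms finite_subset by blast
    moreover have "a \<notin> J" using J assms by blast
    ultimately show ?thesis using J assms by (auto simp: ksubsets_def)
  qed
qed

lemma ksubsets_insert_disj: "a \<notin> A \<Longrightarrow> ksubsets A (Suc k) \<inter> insert a ` ksubsets A k = {}"
  by (auto simp: ksubsets_def)

lemma ksubsets_insert_inj: assumes "a \<notin> A" shows "inj_on (insert a) (ksubsets A k)"
proof (rule inj_onI)
  fix x y assume "x \<in> ksubsets A k" "y \<in> ksubsets A k" "insert a x = insert a y"
  then have "a \<notin> x" "a \<notin> y" "insert a x = insert a y" using assms by (auto simp: ksubsets_def)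
  then show "x = y" by (metis Diff_insert_absorb)
qed

lemma prod_insert_image:
  assumes "a \<notin> A" "finite A"
  shows "(\<Prod>I\<in>insert a ` ksubsets A k. f I) = (\<Prod>J\<in>ksubsets A k. f (insert a J))"
  by (rule prod.reindex[OF ksubsets_insert_inj[OF assms(1)], unfolded comp_def])

lemma prod_u_insert: "a \<notin> A \<Longrightarrow> J \<in> ksubsets A k \<Longrightarrow> finite A \<Longrightarrow>
   (\<Prod>i\<in>insert a J. u i) = u a * (\<Prod>i\<in>J. u i)"
  by (subst prod.insert) (auto simp: ksubsets_def dest: finite_subset)

lemma pcompose_lin: "pcompose [:1, - c:] [:0, t:] = [:1, - (t * (c::'a::comm_ring_1)):]"
  by (simp add: pcompose_pCons)

lemma Gr_insert:
  assumes "a \<notin> A" "finite A"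
  shows "Gr (insert a A) (Suc k) u = Gr A (Suc k) u * pcompose (Gr A k u) [:0, u a:]"
proof -
  have "Gr (insert a A) (Suc k) u = Gr A (Suc k) u *
     (\<Prod>I\<in>insert a ` ksubsets A k. [:1, - (\<Prod>i\<in>I. u i):])"
    unfolding Gr_def ksubsets_insert[OF assms]
    by (rule prod.union_disjoint) (use assms ksubsets_finite ksubsets_insert_disj in auto)
  also have "(\<Prod>I\<in>insert a ` ksubsets A k. [:1, - (\<Prod>i\<in>I. u i):])
      = (\<Prod>J\<in>ksubsets A k. [:1, - (u a * (\<Prod>i\<in>J. u i)):])"
    unfolding prod_insert_image[OF assms]
    by (rule prod.cong) (auto simp: prod_u_insert[OF assms(1) _ assms(2)])
  also have "\<dots> = pcompose (Gr A k u) [:0, u a:]"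
    unfolding Gr_def pcompose_prod by (simp add: pcompose_lin)
  finally show ?thesis .
qed

lemma Gm_insert:
  assumes "a \<notin> A" "finite A"
  shows "Gm (insert a A) (Suc k) u = Gm A (Suc k) u * (\<Prod>J\<in>ksubsets A k. [:- (u a * (\<Prod>i\<in>J. u i)), 1:])"
proof -
  have "Gm (insert a A) (Suc k) u = Gm A (Suc k) u *
     (\<Prod>I\<in>insert a ` ksubsets A k. [:- (\<Prod>i\<in>I. u i), 1:])"
    unfolding Gm_def ksubsets_insert[OF assms]
    by (rule prod.union_disjoint) (use assms ksubsets_finite ksubsets_insert_disj in auto)
  also have "(\<Prod>I\<in>insert a ` ksubsets A k. [:- (\<Prod>i\<in>I. u i), 1:])
      = (\<Prod>J\<in>ksubsets A k. [:- (u a * (\<Prod>i\<in>J. u i)), 1:])"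
    unfolding prod_insert_image[OF assms]
    by (rule prod.cong) (auto simp: prod_u_insert[OF assms(1) _ assms(2)])
  finally show ?thesis .
qed

lemma Fr_insert: "a \<notin> A \<Longrightarrow> finite A \<Longrightarrow> Fr (insert a A) u = Fr A u * [:1, - u a:]"
  by (simp add: Fr_def mult.commute)

lemma Gr_0: "finite A \<Longrightarrow> Gr A 0 u = [:1, -1:]"
  by (simp add: Gr_def ksubsets_0)

lemma ksubsets_empty_Suc: "ksubsets {} (Suc k) = {}"
  by (auto simp: ksubsets_def)

lemma ksubsets_bij:
  assumes "bij_betw h B A"
  shows "bij_betw (image h) (ksubsets B k) (ksubsets A k)"
proof -
  have P: "bij_betw (image h) (Pow B) (Pow A)" by (rule bij_betw_image_Pow[OF assms])
  have inj: "inj_on h B" using assms bij_betw_def by blast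
  have cardI: "card (h ` I) = card I" if "I \<subseteq> B" for I
    using inj that by (meson card_image inj_on_subset)
  show ?thesis
    unfolding bij_betw_def
  proof
    show "inj_on (image h) (ksubsets B k)"
      using P unfolding bij_betw_def ksubsets_def by (auto intro: inj_on_subset)
    have s1: "image h ` ksubsets B k \<subseteq> ksubsets A k"
      using cardI assms unfolding ksubsets_def bij_betw_def by auto
    have s2: "ksubsets A k \<subseteq> image h ` ksubsets B k"
    proof
      fix J assume J: "J \<in> ksubsets A k"
      then have "J \<in> Pow A" by (auto simp: ksubsets_def)
      then have "J \<in> image h ` Pow B" using P unfolding bij_betw_def by simp
      then obtain I where I: "I \<in> Pow B" "J = h ` I" by (rule imageE) simp
      then show "J \<in> image h ` ksubsets B k" using J cardI by (auto simp: ksubsets_def)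
    qed
    show "image h ` ksubsets B k = ksubsets A k" using s1 s2 by (rule equalityI)
  qed
qed

lemma Gr_reindex:
  assumes "bij_betw h B A"
  shows "Gr A k u = Gr B k (u \<circ> h)"
proof -
  have inj: "inj_on h B" using assms bij_betw_def by blast
  have "Gr A k u = (\<Prod>I\<in>ksubsets B k. [:1, - (\<Prod>i\<in>h ` I. u i):])"
    unfolding Gr_def by (rule prod.reindex_bij_betw[OF ksubsets_bij[OF assms], symmetric])
  also have "\<dots> = Gr B k (u \<circ> h)"
    unfolding Gr_def
    by (rule prod.cong[OF refl]) (metis (no_types, lifting) ksubsets_def inj inj_on_subset mem_Collect_eq prod.reindex)
  finally show ?thesis .
qed

lemma Gm_reindex:
  assumes "bij_betw h B A"
  shows "Gm A k u = Gm B k (u \<circ> h)"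
proof -
  have inj: "inj_on h B" using assms bij_betw_def by blast
  have "Gm A k u = (\<Prod>I\<in>ksubsets B k. [:- (\<Prod>i\<in>h ` I. u i), 1:])"
    unfolding Gm_def by (rule prod.reindex_bij_betw[OF ksubsets_bij[OF assms], symmetric])
  also have "\<dots> = Gm B k (u \<circ> h)"
    unfolding Gm_def
    by (rule prod.cong[OF refl]) (metis (no_types, lifting) ksubsets_def inj inj_on_subset mem_Collect_eq prod.reindex)
  finally show ?thesis .
qed

lemma Fr_reindex:
  assumes "bij_betw h B A"
  shows "Fr A u = Fr B (u \<circ> h)"
  unfolding Fr_def using prod.reindex_bij_betw[OF assms, of "\<lambda>j. [:1, - u j:]"] by simp

lemma rhom_Gr: "rhom h \<Longrightarrow> map_poly h (Gr A k u) = Gr A k (h \<circ> u)"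
  by (simp add: Gr_def rhom_prod[OF rhom_map_poly] map_poly_pCons_h rhom_uminus rhom_prod rhom_one rhom_zero)
lemma rhom_Gm: "rhom h \<Longrightarrow> map_poly h (Gm A k u) = Gm A k (h \<circ> u)"
  by (simp add: Gm_def rhom_prod[OF rhom_map_poly] map_poly_pCons_h rhom_uminus rhom_prod rhom_one rhom_zero)
lemma rhom_Fr: "rhom h \<Longrightarrow> map_poly h (Fr A u) = Fr A (h \<circ> u)"
  by (simp add: Fr_def rhom_prod[OF rhom_map_poly] map_poly_pCons_h rhom_uminus rhom_one rhom_zero)

definition revN :: "nat \<Rightarrow> 'a::comm_ring_1 poly \<Rightarrow> 'a poly" where
  "revN N q = (\<Sum>i\<le>N. Polynomial.monom (Polynomial.coeff q (N - i)) i)"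

lemma coeff_revN: "Polynomial.coeff (revN N q) j = (if j \<le> N then Polynomial.coeff q (N - j) else 0)"
  unfolding revN_def coeff_sum coeff_monom by (auto simp: sum.delta)

lemma rhom_revN: "rhom h \<Longrightarrow> map_poly h (revN N q) = revN N (map_poly h q)"
  by (intro poly_eqI) (simp add: coeff_map_poly_h coeff_revN rhom_zero)

lemma reflect_lin: "reflect_poly [:- c, 1:] = [:1, - (c::'a::comm_ring_1):]"
  by (simp add: reflect_poly_def cCons_def)

lemma prod_rev:
  fixes c :: "'b \<Rightarrow> 'a::idom"
  assumes "finite T"
  shows "(\<Prod>t\<in>T. [:- c t, 1:]) = revN (card T) (\<Prod>t\<in>T. [:1, - c t:])"
proof -
  let ?p = "(\<Prod>t\<in>T. [:- c t, 1:])"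
  have q: "(\<Prod>t\<in>T. [:1, - c t:]) = reflect_poly ?p"
    by (simp add: reflect_poly_prod reflect_lin)
  have d: "Polynomial.degree ?p = card T"
    by (subst degree_prod_sum_eq) auto
  show ?thesis
  proof (rule poly_eqI)
    fix j
    show "Polynomial.coeff ?p j = Polynomial.coeff (revN (card T) (\<Prod>t\<in>T. [:1, - c t:])) j"
      unfolding coeff_revN q coeff_reflect_poly d
      using d by (auto simp: coeff_eq_0)
  qed
qed

lemma Gm_rev: "finite A \<Longrightarrow> Gm A k (u :: nat \<Rightarrow> 'a::idom) = revN (card (ksubsets A k)) (Gr A k u)"
  unfolding Gm_def Gr_def by (rule prod_rev[OF ksubsets_finite])

lemma coeff_div_lin:
  fixes g :: "'a::comm_ring_1 poly"
  shows "Polynomial.coeff g i = (\<Sum>l\<le>i. Polynomial.coeff (g * [:1, - t:]) l * t ^ (i - l))"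
proof (induction i)
  case 0 then show ?case by (simp add: coeff_mult)
next
  case (Suc i)
  have e: "g * [:1, - t:] = g - Polynomial.smult t (pCons 0 g)"
    by (simp add: mult.commute[of g] mult_pCons_left algebra_simps smult_minus_left)
  have "Polynomial.coeff (g * [:1, - t:]) (Suc i) = Polynomial.coeff g (Suc i) - t * Polynomial.coeff g i"
    unfolding e by simp
  then have "Polynomial.coeff g (Suc i) = Polynomial.coeff (g * [:1, - t:]) (Suc i) + t * Polynomial.coeff g i" by simp
  also have "\<dots> = Polynomial.coeff (g * [:1, - t:]) (Suc i) + (\<Sum>l\<le>i. Polynomial.coeff (g * [:1, - t:]) l * t ^ (Suc i - l))"
    unfolding Suc sum_distrib_left
    by (intro arg_cong2[where f="(+)"] refl sum.cong) (auto simp: Suc_diff_le algebra_simps)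
  also have "\<dots> = (\<Sum>l\<le>Suc i. Polynomial.coeff (g * [:1, - t:]) l * t ^ (Suc i - l))"
    by (simp add: sum.atMost_Suc)
  finally show ?case .
qed




lemma sr_poly:
  assumes "sr S"
  shows "sr {q :: 'a::comm_ring_1 poly. \<forall>l. Polynomial.coeff q l \<in> S}"
  unfolding sr_def
proof (intro conjI ballI)
  show "0 \<in> {q. \<forall>l. Polynomial.coeff q l \<in> S}" using sr_zero[OF assms] by simp
  show "1 \<in> {q. \<forall>l. Polynomial.coeff q l \<in> S}" using sr_zero[OF assms] sr_one[OF assms]
    by (simp add: coeff_1)
  fix x y assume x: "x \<in> {q. \<forall>l. Polynomial.coeff q l \<in> S}" and y: "y \<in> {q. \<forall>l. Polynomial.coeff q l \<in> S}"
  show "x + y \<in> {q. \<forall>l. Polynomial.coeff q l \<in> S}" using x y sr_add[OF assms] by simp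
  show "- x \<in> {q. \<forall>l. Polynomial.coeff q l \<in> S}" using x sr_uminus[OF assms] by simp
  show "x * y \<in> {q. \<forall>l. Polynomial.coeff q l \<in> S}" using x y
    by (simp add: coeff_mult sr_sum[OF assms] sr_mult[OF assms])
qed

lemma lift_poly:
  assumes h: "rhom h" and c: "\<And>i. Polynomial.coeff G i \<in> range h"
  shows "\<exists>P. map_poly h P = G"
  using c
proof (induction G)
  case 0 then show ?case by (intro exI[of _ 0]) simp
next
  case (pCons a G)
  have "a \<in> range h" using pCons.prems[of 0] by simp
  then obtain p where p: "h p = a" by auto
  have "\<And>i. Polynomial.coeff G i \<in> range h" using pCons.prems[of "Suc _"] by simp
  then obtain P where P: "map_poly h P = G" using pCons.IH by blast
  show ?case by (intro exI[of _ "pCons p P"]) (simp add: map_poly_pCons_h[OF h] p P)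
qed

lemma degree_lt_aux: "Polynomial.degree p \<le> n \<Longrightarrow> Polynomial.coeff p n = 0 \<Longrightarrow> 0 < n \<Longrightarrow> Polynomial.degree p < n"
proof (rule ccontr)
  assume a: "Polynomial.degree p \<le> n" "Polynomial.coeff p n = 0" "0 < n" "\<not> Polynomial.degree p < n"
  then have "Polynomial.degree p = n" by simp
  then have "p = 0" using a(2) by (metis leading_coeff_0_iff)
  then show False using a by simp
qed

lemma reduce_monic:
  fixes F :: "'a::comm_ring_1 poly"
  assumes S: "sr S" and Fc: "\<And>l. Polynomial.coeff F l \<in> S" and Fm: "Polynomial.lead_coeff F = 1"
    and d: "Polynomial.degree F = d" "1 \<le> d"
  shows "(\<forall>l. Polynomial.coeff Q l \<in> S) \<Longrightarrow> \<exists>R D. (\<forall>l. Polynomial.coeff R l \<in> S) \<and> Polynomial.degree R < d \<and> Q = D * F + R"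
proof (induction "Polynomial.degree Q" arbitrary: Q rule: less_induct)
  case less
  show ?case
  proof (cases "Polynomial.degree Q < d")
    case True
    then show ?thesis using less.prems by (intro exI[of _ Q] exI[of _ 0]) simp
  next
    case False
    define c where "c = Polynomial.lead_coeff Q"
    define e where "e = Polynomial.degree Q - d"
    define Q' where "Q' = Q - Polynomial.monom c e * F"
    have cS: "c \<in> S" using less.prems c_def by simp
    have Q'c: "\<forall>l. Polynomial.coeff Q' l \<in> S"
      unfolding Q'_def using less.prems cS Fc
      by (auto simp: coeff_monom_mult intro: sr_diff[OF S] sr_mult[OF S] sr_zero[OF S])
    have dm: "Polynomial.degree (Polynomial.monom c e * F) \<le> Polynomial.degree Q"
    proof (rule order.trans[OF degree_mult_le])
      have "Polynomial.degree (Polynomial.monom c e) \<le> e" by (rule degree_monom_le)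
      then show "Polynomial.degree (Polynomial.monom c e) + Polynomial.degree F \<le> Polynomial.degree Q"
        using False d e_def by linarith
    qed
    have dQ': "Polynomial.degree Q' \<le> Polynomial.degree Q"
      unfolding Q'_def by (rule order.trans[OF degree_diff_le_max]) (use dm in auto)
    have "Polynomial.coeff Q' (Polynomial.degree Q) = 0"
      unfolding Q'_def using False d Fm by (simp add: coeff_monom_mult c_def e_def)
    then have lt: "Polynomial.degree Q' < Polynomial.degree Q"
      using dQ' False d by (intro degree_lt_aux) auto
    obtain R D where RD: "\<forall>l. Polynomial.coeff R l \<in> S" "Polynomial.degree R < d" "Q' = D * F + R"
      using less.hyps[OF lt Q'c] by blast
    have "Q = (D + Polynomial.monom c e) * F + R"
    proof -
      have "Q = Q' + Polynomial.monom c e * F" unfolding Q'_def by simp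
      also have "\<dots> = (D + Polynomial.monom c e) * F + R" unfolding RD(3) by (simp add: distrib_right)
      finally show ?thesis .
    qed
    then show ?thesis using RD(1,2) by (intro exI[of _ R] exI[of _ "D + Polynomial.monom c e"]) simp
  qed
qed

lemma roots_const:
  fixes R :: "'a::idom poly"
  assumes "Polynomial.degree R < n" "inj_on x {..<n}" "\<And>j. j < n \<Longrightarrow> poly R (x j) = c"
  shows "R = [:c:]"
proof (rule ccontr)
  assume ne: "R \<noteq> [:c:]"
  let ?D = "R - [:c:]"
  have D0: "?D \<noteq> 0" using ne by simp
  have "Polynomial.degree ?D \<le> max (Polynomial.degree R) (Polynomial.degree [:c:])" by (rule degree_diff_le_max)
  then have dD: "Polynomial.degree ?D < n" using assms(1) by simp
  have sub: "x ` {..<n} \<subseteq> {y. poly ?D y = 0}" using assms(3) by auto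
  have "n = card (x ` {..<n})" using assms(2) by (simp add: card_image)
  also have "\<dots> \<le> card {y. poly ?D y = 0}" by (rule card_mono[OF poly_roots_finite[OF D0] sub])
  also have "\<dots> \<le> Polynomial.degree ?D" by (rule card_poly_roots_bound[OF D0])
  finally show False using dD by simp
qed

definition aX :: "nat \<Rightarrow> nat \<Rightarrow> MP" where "aX n i = Polynomial.coeff (Fr {..<n} Xv) i"

lemma mev_comp_fun: "rhom h \<Longrightarrow> h \<circ> mev \<rho> = mev (h \<circ> \<rho>)"
  by (rule ext) (simp add: mev_comp)

lemma formula_transfer:
  assumes "map_poly (mev (aX n)) P = Gr {..<n} k Xv"
  shows "map_poly (mev (\<lambda>i. Polynomial.coeff (Fr {..<n} u) i)) P = Gr {..<n} k (u::nat \<Rightarrow> 'b::comm_ring_1)"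
proof -
  have h: "rhom (mev u)" by (rule rhom_mev)
  have e1: "mev u \<circ> aX n = (\<lambda>i. Polynomial.coeff (Fr {..<n} u) i)"
  proof
    fix i
    have "mev u (aX n i) = Polynomial.coeff (map_poly (mev u) (Fr {..<n} Xv)) i"
      by (simp add: aX_def coeff_map_poly_h[OF h])
    also have "\<dots> = Polynomial.coeff (Fr {..<n} u) i"
      by (simp add: rhom_Fr[OF h] comp_def)
    finally show "(mev u \<circ> aX n) i = Polynomial.coeff (Fr {..<n} u) i" by simp
  qed
  have "map_poly (mev u) (map_poly (mev (aX n)) P) = map_poly (mev (\<lambda>i. Polynomial.coeff (Fr {..<n} u) i)) P"
    by (simp add: map_poly_comp_h[OF rhom_mev h] mev_comp_fun[OF h] e1)
  moreover have "map_poly (mev u) (Gr {..<n} k Xv) = Gr {..<n} k u"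
    by (simp add: rhom_Gr[OF h] comp_def)
  ultimately show ?thesis using assms by simp
qed




definition sw :: "nat \<Rightarrow> nat \<Rightarrow> nat \<Rightarrow> nat" where
  "sw j n x = (if x = j then n else if x = n then j else x)"

lemma sw_bij: "j < N \<Longrightarrow> n < N \<Longrightarrow> bij_betw (sw j n) {..<N} {..<N}"
  by (rule bij_betw_byWitness[where f'="sw j n"]) (auto simp: sw_def)

lemma Gr_empty_const: "Gr {} k u = Gr {} k w"
  unfolding Gr_def ksubsets_def by (rule prod.cong) auto

lemma Gr_const_formula:
  assumes "Gr A k (Xv::nat\<Rightarrow>MP) = Gr A k (\<lambda>_. 1)"
  shows "\<exists>P. map_poly (mev \<rho>) P = Gr A k Xv"
proof -
  have "map_poly (mev \<rho>) (Gr A k (\<lambda>_. 1)) = Gr A k (\<lambda>_. 1)"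
    by (simp add: rhom_Gr[OF rhom_mev] comp_def mev_one)
  then show ?thesis using assms by metis
qed

lemma generic: "\<exists>P. map_poly (mev (aX n)) P = Gr {..<n} k Xv"
proof (induction n arbitrary: k)
  case 0
  show ?case by (rule Gr_const_formula) (simp add: Gr_empty_const[of k Xv "\<lambda>_. 1"])
next
  case (Suc n)
  show ?case
  proof (cases k)
    case 0
    show ?thesis by (rule Gr_const_formula) (simp add: Gr_0 0)
  next
    case (Suc k')
    obtain P1 where P1: "map_poly (mev (aX n)) P1 = Gr {..<n} (Suc k') Xv" using Suc.IH by blast
    obtain P2 where P2: "map_poly (mev (aX n)) P2 = Gr {..<n} k' Xv" using Suc.IH by blast
    define a where "a = aX (Suc n)"
    define T where "T = ([:0, 1:] :: MP poly)"
    define B where "B i = (\<Sum>l\<le>i. [:a l:] * T ^ (i - l))" for i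
    define \<Psi> where "\<Psi> = map_poly (mev B) P1 * pcompose (map_poly (mev B) P2) [:0, T:]"
    define G where "G = Gr {..<Suc n} (Suc k') Xv"
    have key: "poly (Polynomial.coeff \<Psi> i) (Xv j) = Polynomial.coeff G i" if "j < Suc n" for i j
    proof -
      define w where "w = Xv \<circ> sw j n"
      have bij: "bij_betw (sw j n) {..<Suc n} {..<Suc n}" using that by (intro sw_bij) auto
      have G: "G = Gr {..<Suc n} (Suc k') w" unfolding G_def w_def by (rule Gr_reindex[OF bij])
      have F: "Fr {..<Suc n} Xv = Fr {..<Suc n} w" unfolding w_def by (rule Fr_reindex[OF bij])
      have wn: "w n = Xv j" by (simp add: w_def sw_def)
      have ins: "{..<Suc n} = insert n {..<n}" by auto
      have Gd: "Gr {..<Suc n} (Suc k') w = Gr {..<n} (Suc k') w * pcompose (Gr {..<n} k' w) [:0, Xv j:]"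
        unfolding ins by (subst Gr_insert) (auto simp: wn)
      have Fd: "Fr {..<Suc n} w = Fr {..<n} w * [:1, - Xv j:]"
        unfolding ins by (subst Fr_insert) (auto simp: wn)
      have Bj: "poly (B i) (Xv j) = Polynomial.coeff (Fr {..<n} w) i" for i
      proof -
        have "Polynomial.coeff (Fr {..<n} w) i = (\<Sum>l\<le>i. Polynomial.coeff (Fr {..<Suc n} w) l * Xv j ^ (i - l))"
          using coeff_div_lin[of "Fr {..<n} w" i "Xv j"] Fd by simp
        also have "\<dots> = poly (B i) (Xv j)"
          by (simp add: B_def T_def poly_sum a_def aX_def F)
        finally show ?thesis by simp
      qed
      define ev where "ev = (\<lambda>q::MP poly. poly q (Xv j))"
      have ev: "rhom ev" unfolding ev_def by (rule rhom_poly)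
      have evB: "ev \<circ> mev B = mev (\<lambda>i. Polynomial.coeff (Fr {..<n} w) i)"
        using mev_comp_fun[OF ev, of B] Bj by (simp add: comp_def ev_def)
      have evT: "map_poly ev [:0, T:] = [:0, Xv j:]"
        by (simp add: map_poly_pCons ev_def T_def)
      have "map_poly ev \<Psi> = map_poly (ev \<circ> mev B) P1 * pcompose (map_poly (ev \<circ> mev B) P2) [:0, Xv j:]"
        unfolding \<Psi>_def
        by (simp add: rhom_mult[OF rhom_map_poly[OF ev]] map_poly_pcompose_h[OF ev]
            map_poly_comp_h[OF rhom_mev ev] evT)
      also have "\<dots> = Gr {..<n} (Suc k') w * pcompose (Gr {..<n} k' w) [:0, Xv j:]"
        unfolding evB formula_transfer[OF P1, of w] formula_transfer[OF P2, of w] ..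
      finally have "map_poly ev \<Psi> = G" using G Gd by simp
      then show ?thesis by (metis coeff_map_poly_h[OF ev] ev_def)
    qed
    define S where "S = range (mev a)"
    have S: "sr S" unfolding S_def by (rule sr_range[OF rhom_mev])
    have aS: "a l \<in> S" for l unfolding S_def by (metis mev_Xv rangeI)
    define ST where "ST = {q :: MP poly. \<forall>l. Polynomial.coeff q l \<in> S}"
    have ST: "sr ST" unfolding ST_def by (rule sr_poly[OF S])
    have TST: "T \<in> ST"
    proof -
      have "Polynomial.coeff T l \<in> S" for l
        using sr_zero[OF S] sr_one[OF S] by (cases l) (auto simp: T_def coeff_pCons split: nat.split)
      then show ?thesis by (simp add: ST_def)
    qed
    have cST: "[:s:] \<in> ST" if "s \<in> S" for s
      using that sr_zero[OF S] by (auto simp: ST_def coeff_pCons split: nat.split)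
    have BST: "B i \<in> ST" for i
      unfolding B_def by (intro sr_sum[OF ST] sr_mult[OF ST] sr_power[OF ST] cST aS TST)
    have mevST: "mev B p \<in> ST" for p by (rule mev_in_sr[OF ST BST])
    define STT where "STT = {Q :: MP poly poly. \<forall>i. Polynomial.coeff Q i \<in> ST}"
    have STT: "sr STT" unfolding STT_def by (rule sr_poly[OF ST])
    have X1: "map_poly (mev B) P1 \<in> STT"
      by (simp add: STT_def coeff_map_poly_h[OF rhom_mev] mevST)
    have X2: "pcompose (map_poly (mev B) P2) [:0, T:] \<in> STT"
      by (simp add: STT_def coeff_pcompose_linear coeff_map_poly_h[OF rhom_mev]
          sr_mult[OF ST sr_power[OF ST TST] mevST])
    have \<Psi>ST: "Polynomial.coeff \<Psi> i \<in> ST" for i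
      using sr_mult[OF STT X1 X2] unfolding \<Psi>_def STT_def by simp
    define F where "F = (\<Prod>j\<in>{..<Suc n}. [:- Xv j, 1:])"
    have Frev: "F = revN (Suc n) (Fr {..<Suc n} Xv)"
      using prod_rev[of "{..<Suc n}" Xv] by (simp add: F_def Fr_def)
    have Fc: "Polynomial.coeff F l \<in> S" for l
      unfolding Frev coeff_revN using aS sr_zero[OF S] by (auto simp: a_def aX_def)
    have Fm: "Polynomial.lead_coeff F = 1" unfolding F_def lead_coeff_prod by simp
    have Fdeg: "Polynomial.degree F = Suc n" unfolding F_def by (subst degree_prod_sum_eq) auto
    have F0: "poly F (Xv j) = 0" if "j < Suc n" for j
      unfolding F_def poly_prod using that by (intro prod_zero) auto
    have coefS: "Polynomial.coeff G i \<in> S" for i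
    proof -
      obtain R D where RD: "\<forall>l. Polynomial.coeff R l \<in> S" "Polynomial.degree R < Suc n"
          "Polynomial.coeff \<Psi> i = D * F + R"
        using reduce_monic[OF S Fc Fm Fdeg, of "Polynomial.coeff \<Psi> i"] \<Psi>ST[of i]
        by (auto simp: ST_def)
      have "poly R (Xv j) = Polynomial.coeff G i" if "j < Suc n" for j
        using key[OF that, of i] F0[OF that] RD(3) by (simp add: poly_add poly_mult)
      then have "R = [:Polynomial.coeff G i:]"
        by (intro roots_const[OF RD(2)]) (auto intro: inj_on_subset[OF Xv_inj])
      then have "Polynomial.coeff G i = Polynomial.coeff R 0" by simp
      then show ?thesis using RD(1) by simp
    qed
    obtain P where "map_poly (mev a) P = G"
      using lift_poly[OF rhom_mev, of G a] coefS unfolding S_def by blast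
    then show ?thesis unfolding a_def G_def Suc by blast
  qed
qed

definition Pk :: "nat \<Rightarrow> nat \<Rightarrow> MP poly" where
  "Pk n k = (SOME P. map_poly (mev (aX n)) P = Gr {..<n} k Xv)"

lemma Pk_formula_std: "map_poly (mev (\<lambda>i. Polynomial.coeff (Fr {..<n} u) i)) (Pk n k) = Gr {..<n} k (u::nat \<Rightarrow> 'b::comm_ring_1)"
  unfolding Pk_def by (rule formula_transfer, rule someI_ex, rule generic)

lemma Pk_formula:
  assumes "finite A"
  shows "map_poly (mev (\<lambda>i. Polynomial.coeff (Fr A u) i)) (Pk (card A) k) = Gr A k (u::nat \<Rightarrow> 'b::comm_ring_1)"
proof -
  obtain h where h: "bij_betw h {..<card A} A"
    using ex_bij_betw_nat_finite[OF assms] by (auto simp: lessThan_atLeast0)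
  show ?thesis
    using Pk_formula_std[of "card A" "u \<circ> h" k]
    by (simp add: Fr_reindex[OF h] Gr_reindex[OF h])
qed




lemma rhom_embx: "rhom embx"
  unfolding rhom_def embx_def
  by (simp add: to_ac_add[symmetric] to_ac_mult[symmetric] One_fract_def)

lemma rhom_embxs: "rhom embxs"
  unfolding rhom_def embxs_def
  by (simp add: to_ac_add[symmetric] to_ac_mult[symmetric] One_fract_def)

lemma embx_inj: "embx p = embx q \<Longrightarrow> p = q"
  unfolding embx_def by (simp add: eq_fract)

lemma embxs_inj: "embxs p = embxs q \<Longrightarrow> p = q"
  unfolding embxs_def by (simp add: eq_fract)

lemma rhom_subst: "rhom subst_xs"
  unfolding subst_xs_def by (rule rhom_poly)

lemma map_poly_inj:
  assumes h: "rhom h" and inj: "\<And>a b. h a = h b \<Longrightarrow> a = b"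
    and e: "map_poly h p = map_poly h q"
  shows "p = q"
proof (rule poly_eqI)
  fix n
  have "h (Polynomial.coeff p n) = h (Polynomial.coeff q n)"
    using arg_cong[OF e, of "\<lambda>r. Polynomial.coeff r n"] by (simp add: coeff_map_poly_h[OF h])
  then show "Polynomial.coeff p n = Polynomial.coeff q n" by (rule inj)
qed

lemma Gm_cong: "finite A \<Longrightarrow> (\<And>i. i \<in> A \<Longrightarrow> u i = u' i) \<Longrightarrow> Gm A k u = Gm A k u'"
  unfolding Gm_def ksubsets_def
  by (intro prod.cong refl arg_cong2[where f=pCons] arg_cong[where f=uminus]) auto

lemma map_formula:
  assumes h: "rhom h" and fA: "finite A"
    and e: "map_poly h F0 = Fr A (u :: nat \<Rightarrow> 'b::idom)"
  shows "map_poly h (revN (card (ksubsets A k)) (map_poly (mev (Polynomial.coeff F0)) (Pk (card A) k)))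
         = Gm A k u"
proof -
  have c: "h \<circ> Polynomial.coeff F0 = (\<lambda>i. Polynomial.coeff (Fr A u) i)"
    by (rule ext) (simp add: e[symmetric] coeff_map_poly_h[OF h])
  show ?thesis
    by (simp add: rhom_revN[OF h] map_poly_comp_h[OF rhom_mev h] mev_comp_fun[OF h] c
        Pk_formula[OF fA] Gm_rev[OF fA, symmetric])
qed

lemma prod_mset_list: "(\<Prod>x\<in>#mset xs. f x) = (\<Prod>i<length xs. f (xs ! i))"
  by (induction xs) (simp_all add: prod.lessThan_Suc_shift del: prod.lessThan_Suc)

lemma split_exists:
  fixes L :: "'a::alg_closed_field poly"
  assumes d: "Polynomial.degree L = m" and c0: "Polynomial.coeff L 0 = 1"
  shows "\<exists>u. L = (\<Prod>j\<in>{1..m}. [:1, - u j:])"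
proof -
  let ?g = "reflect_poly L"
  have L0: "L \<noteq> 0" using c0 by auto
  have g0: "?g \<noteq> 0" using L0 by simp
  have dg: "Polynomial.degree ?g = m" using d c0 by simp
  have lg: "Polynomial.lead_coeff ?g = 1"
    using coeff_0_reflect_poly[of ?g] reflect_poly_reflect_poly[of L] c0 by simp
  obtain A where A: "size A = m" "?g = Polynomial.smult 1 (\<Prod>x\<in>#A. [:-x, 1:])"
    using alg_closed_imp_factorization[OF g0] dg lg by metis
  obtain xs where xs: "mset xs = A" using ex_mset by blast
  have len: "length xs = m" using A(1) xs by auto
  define u where "u j = xs ! (j - 1)" for j
  have "?g = (\<Prod>j\<in>{1..m}. [:- u j, 1:])"
    using A(2) unfolding xs[symmetric] prod_mset_list len
    by (simp add: prod.atLeast1_atMost_eq u_def)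
  then have "L = reflect_poly (\<Prod>j\<in>{1..m}. [:- u j, 1:])"
    using reflect_poly_reflect_poly[of L] c0 by simp
  also have "\<dots> = (\<Prod>j\<in>{1..m}. [:1, - u j:])"
    by (simp add: reflect_poly_prod reflect_lin)
  finally show ?thesis by blast
qed

lemma map_poly_F:
  assumes h: "rhom h"
  shows "map_poly h ([:1:] - [:0, a:] + Polynomial.monom b m) = [:1:] - [:0, h a:] + Polynomial.monom (h b) m"
  using h
  by (simp add: rhom_add[OF rhom_map_poly[OF h]] rhom_diff[OF rhom_map_poly[OF h]]
      map_poly_pCons_h map_poly_monom rhom_zero rhom_one rhom_uminus[OF h])

lemma telescope_F1:
  fixes x :: "'a::comm_ring_1"
  assumes m: "1 \<le> m"
  shows "[:1:] - [:0, 1 + x:] + Polynomial.monom x m =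
         [:1, -1:] * ([:1:] - (\<Sum>i\<in>{1..<m}. Polynomial.monom x i))"
proof -
  have e0: "[:1, -1:] * p = p - pCons 0 p" for p :: "'a poly"
    by (simp add: mult_pCons_left)
  have e: "[:1, -1:] * Polynomial.monom x i = - (Polynomial.monom x (Suc i) - Polynomial.monom x i)" for i
    by (simp add: e0 monom_Suc)
  have "[:1, -1:] * ([:1:] - (\<Sum>i\<in>{1..<m}. Polynomial.monom x i))
      = [:1, -1:] * [:1:] - (\<Sum>i\<in>{1..<m}. [:1, -1:] * Polynomial.monom x i)"
    by (simp only: right_diff_distrib sum_distrib_left)
  also have "\<dots> = [:1, -1:] - (\<Sum>i\<in>{1..<m}. - (Polynomial.monom x (Suc i) - Polynomial.monom x i))"
    by (simp only: e mult_1_right one_pCons[symmetric])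
  also have "\<dots> = [:1, -1:] + (\<Sum>i\<in>{1..<m}. Polynomial.monom x (Suc i) - Polynomial.monom x i)"
    by (simp only: sum_negf diff_minus_eq_add)
  also have "\<dots> = [:1, -1:] + (Polynomial.monom x m - Polynomial.monom x 1)"
    by (simp only: sum_Suc_diff'[OF m])
  also have "\<dots> = [:1:] - [:0, 1 + x:] + Polynomial.monom x m"
    by (simp add: monom_Suc monom_0 algebra_simps)
  finally show ?thesis by simp
qed




theorem mainTheorem1:
  fixes m k :: nat and v :: "nat \<Rightarrow> Kx"
  assumes "m \<ge> 2" and "1 \<le> k" and "k \<le> m - 1"
    and "[:1:] - [:0, embx [:1, 1:]:] + monom (embx [:0, 1:]) m
           = [:1, -1:] * (\<Prod>j\<in>{2..m}. [:1, - v j:])"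
  shows "\<exists>W0 W1 :: int poly poly.
           map_poly embx W0 = (\<Prod>I\<in>ksubsets {2..m} (k - 1). [:- (\<Prod>i\<in>I. v i), 1:])
         \<and> map_poly embx W1 = (\<Prod>I\<in>ksubsets {2..m} k. [:- (\<Prod>i\<in>I. v i), 1:])
         \<and> map_poly subst_xs (c_poly m k) = W0 * W1"
proof -
  define x0 :: "int poly poly" where "x0 = [:0, 1:]"
  define s0 :: "int poly poly" where "s0 = [:[:0, 1:]:]"
  define F0 :: "int poly poly poly" where "F0 = [:1:] - [:0, x0:] + Polynomial.monom s0 m"
  define F1 :: "int poly poly" where "F1 = [:1:] - [:0, [:1, 1:]:] + Polynomial.monom [:0, 1:] m"
  define Q0 :: "int poly poly" where "Q0 = [:1:] - (\<Sum>i\<in>{1..<m}. Polynomial.monom [:0, 1:] i)"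
  define w where "w = v(1 := 1)"
  define P0 where "P0 = revN (card (ksubsets {1..m} k)) (map_poly (mev (Polynomial.coeff F0)) (Pk (card {1..m}) k))"
  define W0 where "W0 = revN (card (ksubsets {2..m} (k - 1))) (map_poly (mev (Polynomial.coeff Q0)) (Pk (card {2..m}) (k - 1)))"
  define W1 where "W1 = revN (card (ksubsets {2..m} k)) (map_poly (mev (Polynomial.coeff Q0)) (Pk (card {2..m}) k))"
  have fin1: "finite {1..m}" and fin2: "finite {2..m}" by auto
  have m1: "1 \<le> m" and m0: "m \<noteq> 0" using assms(1) by auto
  have ins: "{1..m} = insert 1 {2..m}" and n1: "1 \<notin> {2..m}" using assms(1) by auto

  have LF0: "map_poly embxs F0 = [:1:] - [:0, embxs [:0, 1:]:] + monom (embxs [:[:0, 1:]:]) m"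
    unfolding F0_def x0_def s0_def by (rule map_poly_F[OF rhom_embxs])
  have P0prop: "map_poly embxs P0 = (\<Prod>I\<in>ksubsets {1..m} k. [:- (\<Prod>i\<in>I. u i), 1:])"
    if "[:1:] - [:0, embxs [:0, 1:]:] + monom (embxs [:[:0, 1:]:]) m = (\<Prod>j\<in>{1..m}. [:1, - u j:])" for u
    unfolding P0_def Gm_def[symmetric]
    by (rule map_formula[OF rhom_embxs fin1]) (use that LF0 in \<open>simp add: Fr_def\<close>)
  have S0: "embxs [:[:0, 1:]:] \<noteq> 0"
  proof
    assume "embxs [:[:0, 1:]:] = 0"
    then have "embxs [:[:0, 1:]:] = embxs 0" by (simp add: rhom_zero[OF rhom_embxs])
    then show False using embxs_inj by fastforce
  qed
  have ex_u: "\<exists>u. [:1:] - [:0, embxs [:0, 1:]:] + monom (embxs [:[:0, 1:]:]) m = (\<Prod>j\<in>{1..m}. [:1, - u j:])"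
  proof (rule split_exists)
    let ?A = "[:1:] - [:0, embxs [:0, 1:]:] :: Kxs poly"
    have dA: "Polynomial.degree ?A < Polynomial.degree (Polynomial.monom (embxs [:[:0, 1:]:]) m)"
      using assms(1) S0 by (simp add: degree_monom_eq)
    show "Polynomial.degree (?A + Polynomial.monom (embxs [:[:0, 1:]:]) m) = m"
      using degree_add_eq_right[OF dA] S0 by (simp add: degree_monom_eq)
    show "Polynomial.coeff (?A + Polynomial.monom (embxs [:[:0, 1:]:]) m) 0 = 1"
      using m0 by simp
  qed
  have cP: "c_poly m k = P0"
    unfolding c_poly_def
  proof (rule the_equality)
    show "\<forall>u. [:1:] - [:0, embxs [:0, 1:]:] + monom (embxs [:[:0, 1:]:]) m = (\<Prod>j\<in>{1..m}. [:1, - u j:]) \<longrightarrow>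
       map_poly embxs P0 = (\<Prod>I\<in>ksubsets {1..m} k. [:- (\<Prod>i\<in>I. u i), 1:])"
      using P0prop by blast
  next
    fix P
    assume P: "\<forall>u. [:1:] - [:0, embxs [:0, 1:]:] + monom (embxs [:[:0, 1:]:]) m = (\<Prod>j\<in>{1..m}. [:1, - u j:]) \<longrightarrow>
       map_poly embxs P = (\<Prod>I\<in>ksubsets {1..m} k. [:- (\<Prod>i\<in>I. u i), 1:])"
    obtain u where u: "[:1:] - [:0, embxs [:0, 1:]:] + monom (embxs [:[:0, 1:]:]) m = (\<Prod>j\<in>{1..m}. [:1, - u j:])"
      using ex_u by blast
    have "map_poly embxs P = map_poly embxs P0" using P u P0prop[OF u] by simp
    then show "P = P0" using map_poly_inj[OF rhom_embxs, of P P0] embxs_inj by blast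
  qed

  have LF1: "map_poly embx F1 = [:1:] - [:0, embx [:1, 1:]:] + monom (embx [:0, 1:]) m"
    unfolding F1_def by (rule map_poly_F[OF rhom_embx])
  have F1Q0: "F1 = [:1, -1:] * Q0"
  proof -
    have "[:1, 1:] = 1 + ([:0, 1:] :: int poly)" by (simp add: one_pCons)
    then show ?thesis unfolding F1_def Q0_def using telescope_F1[OF m1, of "[:0, 1:] :: int poly"] by simp
  qed
  have Fvw: "Fr {2..m} w = Fr {2..m} v"
    unfolding Fr_def w_def by (rule prod.cong) auto
  have Fw: "Fr {1..m} w = [:1, -1:] * Fr {2..m} v"
    unfolding ins Fr_insert[OF n1 fin2] Fvw by (simp add: w_def mult.commute)
  have mapF1: "map_poly embx F1 = Fr {1..m} w"
    using LF1 assms(4) Fw by (simp add: Fr_def)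
  have m11: "map_poly embx [:1, -1:] = [:1, -1:]"
    by (simp add: map_poly_pCons_h[OF rhom_embx] rhom_one[OF rhom_embx] rhom_uminus[OF rhom_embx] rhom_zero[OF rhom_embx])
  have mapQ0: "map_poly embx Q0 = Fr {2..m} v"
  proof -
    have "[:1, -1:] * map_poly embx Q0 = [:1, -1:] * Fr {2..m} v"
      using mapF1 Fw unfolding F1Q0 rhom_mult[OF rhom_map_poly[OF rhom_embx]] m11 by simp
    moreover have ne: "[:1, -1:] \<noteq> (0 :: Kx poly)" by simp
    ultimately show ?thesis using mult_left_cancel[OF ne] by blast
  qed
  have W1p: "map_poly embx W1 = Gm {2..m} k v"
    unfolding W1_def by (rule map_formula[OF rhom_embx fin2 mapQ0])
  have W0p: "map_poly embx W0 = Gm {2..m} (k - 1) v"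
    unfolding W0_def by (rule map_formula[OF rhom_embx fin2 mapQ0])
  have subF0: "map_poly subst_xs F0 = F1"
    unfolding F0_def F1_def map_poly_F[OF rhom_subst] by (simp add: subst_xs_def x0_def s0_def)
  have csub: "subst_xs \<circ> Polynomial.coeff F0 = Polynomial.coeff F1"
    by (rule ext) (simp add: subF0[symmetric] coeff_map_poly_h[OF rhom_subst])
  have SP0: "map_poly subst_xs P0 = revN (card (ksubsets {1..m} k)) (map_poly (mev (Polynomial.coeff F1)) (Pk (card {1..m}) k))"
    unfolding P0_def
    by (simp add: rhom_revN[OF rhom_subst] map_poly_comp_h[OF rhom_mev rhom_subst] mev_comp_fun[OF rhom_subst] csub)
  have E: "map_poly embx (map_poly subst_xs P0) = Gm {1..m} k w"
    unfolding SP0 by (rule map_formula[OF rhom_embx fin1 mapF1])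
  obtain k' where k': "k = Suc k'" using assms(2) by (cases k) auto
  have Gmw: "Gm {1..m} k w = Gm {2..m} k v * Gm {2..m} (k - 1) v"
  proof -
    have "Gm {1..m} k w = Gm {2..m} k w * (\<Prod>J\<in>ksubsets {2..m} k'. [:- (w 1 * (\<Prod>i\<in>J. w i)), 1:])"
      unfolding ins k' by (rule Gm_insert[OF n1 fin2])
    also have "(\<Prod>J\<in>ksubsets {2..m} k'. [:- (w 1 * (\<Prod>i\<in>J. w i)), 1:]) = Gm {2..m} k' w"
      by (simp add: Gm_def w_def)
    also have "Gm {2..m} k' w = Gm {2..m} k' v" by (rule Gm_cong[OF fin2]) (auto simp: w_def)
    also have "Gm {2..m} k w = Gm {2..m} k v" by (rule Gm_cong[OF fin2]) (auto simp: w_def)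
    finally show ?thesis by (simp add: k')
  qed
  have "map_poly embx (map_poly subst_xs P0) = map_poly embx (W0 * W1)"
    unfolding E Gmw rhom_mult[OF rhom_map_poly[OF rhom_embx]] W0p W1p by (simp add: mult.commute)
  then have main: "map_poly subst_xs P0 = W0 * W1"
    using map_poly_inj[OF rhom_embx, of "map_poly subst_xs P0" "W0 * W1"] embx_inj by blast
  show ?thesis
    using W0p W1p main cP unfolding Gm_def by blast
qed


end
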